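(* Let $G$ be a finite group with identity $e$, and let $\mathcal{B}$ be the set of bases of a rank-$3$ matroid on ground set $G$ invariant under left multiplication by $G$. Let $g,h\in G$ be such that each of the triples $(e,g,gh)$, $(e,g,h)$, $(e,g,g^{-1})$ consists of pairwise distinct elements. If $f_{g,gh}\subseteq\mathcal{B}$, then $f_{g,g^{-1}}\subseteq\mathcal{B}$ or $f_{g,h}\subseteq\mathcal{B}$.
   Context: $G$ acts on $\binom{G}{3}$ by $x\cdot\{a,b,c\}=\{xa,xb,xc\}$. For $g,h\in G$ with $e,g,h$ pairwise distinct, $f_{g,h}=\{\{a,ag,ah\}\mid a\in G\}$ (a $G$-orbit, with $f_{g,h}=f_{h,g}$). A matroid on ground set $G$ is invariant if its set of bases is preserved by this action. *)

theory Defs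
  imports "HOL-Algebra.Group"
begin

definition matroid_bases :: "'a set \<Rightarrow> 'a set set \<Rightarrow> bool" where
  "matroid_bases E \<B> \<longleftrightarrow> finite E \<and> \<B> \<noteq> {} \<and> (\<forall>b\<in>\<B>. b \<subseteq> E) \<and>
     (\<forall>b1\<in>\<B>. \<forall>b2\<in>\<B>. \<forall>x\<in>b1 - b2. \<exists>y\<in>b2 - b1. insert y (b1 - {x}) \<in> \<B>)"

definition matroid_rank_eq :: "'a set set \<Rightarrow> nat \<Rightarrow> bool" where
  "matroid_rank_eq \<B> r \<longleftrightarrow> (\<forall>b\<in>\<B>. card b = r)"

definition left_invariant :: "('a, 'm) monoid_scheme \<Rightarrow> 'a set set \<Rightarrow> bool" where
  "left_invariant G \<B> \<longleftrightarrow>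
     (\<forall>x\<in>carrier G. (\<lambda>b. (\<lambda>a. x \<otimes>\<^bsub>G\<^esub> a) ` b) ` \<B> = \<B>)"

definition orbit_f :: "('a, 'm) monoid_scheme \<Rightarrow> 'a \<Rightarrow> 'a \<Rightarrow> 'a set set" where
  "orbit_f G g h = {{a, a \<otimes>\<^bsub>G\<^esub> g, a \<otimes>\<^bsub>G\<^esub> h} | a. a \<in> carrier G}"

end

theory Submission
  imports Defs
begin

lemma orbit_sub:
  assumes grp: "group G" and inv: "left_invariant G \<B>"
    and g: "g \<in> carrier G" and y: "y \<in> carrier G"
    and B: "{\<one>\<^bsub>G\<^esub>, g, y} \<in> \<B>"
  shows "orbit_f G g y \<subseteq> \<B>"
proof
  fix s assume "s \<in> orbit_f G g y"
  then obtain a where a: "a \<in> carrier G" and s: "s = {a, a \<otimes>\<^bsub>G\<^esub> g, a \<otimes>\<^bsub>G\<^esub> y}"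
    unfolding orbit_f_def by blast
  have "a \<otimes>\<^bsub>G\<^esub> \<one>\<^bsub>G\<^esub> = a" using a grp by (simp add: group.is_monoid monoid.r_one)
  hence "(\<lambda>a'. a \<otimes>\<^bsub>G\<^esub> a') ` {\<one>\<^bsub>G\<^esub>, g, y} = s"
    using s by simp
  moreover have "(\<lambda>b. (\<lambda>a'. a \<otimes>\<^bsub>G\<^esub> a') ` b) ` \<B> = \<B>"
    using inv a unfolding left_invariant_def by blast
  ultimately show "s \<in> \<B>" using B by (metis image_eqI)
qed

theorem mainTheorem9:
  fixes G :: "('a, 'm) monoid_scheme" and \<B> :: "'a set set" and g h :: 'a
  assumes "group G" and "finite (carrier G)"
    and "matroid_bases (carrier G) \<B>" and "matroid_rank_eq \<B> 3"
    and "left_invariant G \<B>"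
    and "g \<in> carrier G" and "h \<in> carrier G"
    and "distinct [\<one>\<^bsub>G\<^esub>, g, g \<otimes>\<^bsub>G\<^esub> h]"
    and "distinct [\<one>\<^bsub>G\<^esub>, g, h]"
    and "distinct [\<one>\<^bsub>G\<^esub>, g, inv\<^bsub>G\<^esub> g]"
    and "orbit_f G g (g \<otimes>\<^bsub>G\<^esub> h) \<subseteq> \<B>"
  shows "orbit_f G g (inv\<^bsub>G\<^esub> g) \<subseteq> \<B> \<or> orbit_f G g h \<subseteq> \<B>"
proof -
  interpret group G by fact
  note g = \<open>g \<in> carrier G\<close> and h = \<open>h \<in> carrier G\<close>
  let ?e = "\<one>\<^bsub>G\<^esub>" and ?gi = "inv\<^bsub>G\<^esub> g" and ?gh = "g \<otimes>\<^bsub>G\<^esub> h"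
  have gh: "?gh \<in> carrier G" using g h by simp
  have "{?e, ?e \<otimes>\<^bsub>G\<^esub> g, ?e \<otimes>\<^bsub>G\<^esub> ?gh} \<in> orbit_f G g ?gh"
    unfolding orbit_f_def using one_closed by blast
  moreover have "{?e, ?e \<otimes>\<^bsub>G\<^esub> g, ?e \<otimes>\<^bsub>G\<^esub> ?gh} = {?e, g, ?gh}"
    using g gh by (simp only: l_one)
  ultimately have B1: "{?e, g, ?gh} \<in> \<B>" using assms(11) by auto
  have "(\<lambda>a. ?gi \<otimes>\<^bsub>G\<^esub> a) ` {?e, g, ?gh} = {?gi, ?e, h}"
    using g h by (simp add: m_assoc[symmetric])
  moreover have "(\<lambda>b. (\<lambda>a. ?gi \<otimes>\<^bsub>G\<^esub> a) ` b) ` \<B> = \<B>"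
    using assms(5) g unfolding left_invariant_def by simp
  ultimately have B2: "{?gi, ?e, h} \<in> \<B>" using B1 by blast
  show ?thesis
  proof (cases "?gh = ?gi")
    case True
    then show ?thesis using orbit_sub[OF assms(1) assms(5) g] B1 g by simp
  next
    case False
    have "?gh \<noteq> h" using g h assms(8,9) by (simp add: r_cancel_one) (metis)
    with False assms(8) have "?gh \<in> {?e, g, ?gh} - {?gi, ?e, h}" by auto
    then obtain y where y: "y \<in> {?gi, ?e, h} - {?e, g, ?gh}"
      and Y: "insert y ({?e, g, ?gh} - {?gh}) \<in> \<B>"
      using assms(3) B1 B2 unfolding matroid_bases_def by blast
    have "{?e, g, ?gh} - {?gh} = {?e, g}" using assms(8) by auto
    with Y have Y': "{?e, g, y} \<in> \<B>" by (simp add: insert_commute)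
    from y have "y = ?gi \<or> y = h" by auto
    then show ?thesis
    proof
      assume "y = ?gi" thus ?thesis using orbit_sub[OF assms(1) assms(5) g _ ] Y' g by auto
    next
      assume "y = h" thus ?thesis using orbit_sub[OF assms(1) assms(5) g h] Y' by auto
    qed
  qed
qed

end
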